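(* Assume $C\le1$. Let $N,q,L\in\mathbb{N}_{\ge1}$ and $0<\varepsilon\le\frac1{2NL}$ with $$q\ge9\max\{1,A\}\quad\text{and}\quad N\ge\max\Big\{\frac4A,\ \frac{8(n+1)n\cdot2^nDA^{n-1}}{3C^n}\Big\}.$$ If $s\in S=\frac1{NL}\{0,\dots,L-1\}^n$ satisfies $H_{\mathrm{grid}}(\varepsilon)\cap G(s)=\emptyset$, then $$\frac1N\le\frac A4\quad\text{and}\quad\frac{|G(s)\setminus H_{\mathrm{bound}}|}{|G(s)|}\ge1-\frac1{4(n+1)}.$$
   Context: An $n$-dimensional infrastructure consists of a full-rank lattice $\Lambda\subset\mathbb{R}^n$, a finite non-empty set $X$, an injective map $d:X\to\mathbb{R}^n/\Lambda$, and a set $\mathrm{fRep}\subseteq X\times\mathbb{R}^n$ with $X\times\{0\}\subseteq\mathrm{fRep}$ such that $\Phi:\mathrm{fRep}\to\mathbb{R}^n/\Lambda$, $(x,t)\mapsto d(x)+t$, is a bijection. Let $\pi:\mathbb{R}^n\to\mathbb{R}^n/\Lambda$ be the projection, $\hat X=\pi^{-1}(d(X))$, and for $\hat x\in\hat X$ let $\hat V_{\hat x}=\{\hat x+t:(d^{-1}(\pi(\hat x)),t)\in\mathrm{fRep}\}$; these sets partition $\mathbb{R}^n$. Standing assumptions: the infrastructure is cornered (for each $\hat x$, $\hat x\in\hat V_{\hat x}$ and $\{r:\hat x\le r\le t\}\subseteq\hat V_{\hat x}$ for all $t\in\hat V_{\hat x}$, componentwise order); (A1) there is $A>0$ with $\hat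 V_{\hat x}\subseteq\hat x+[0,A]^n$ for all $\hat x$; (A2) there are $C,D>0$ such that $(r+[0,C]^n)\cap\hat X$ has at most $D$ elements for every $r\in\mathbb{R}^n$. $G(s)=\{s+\frac1Nv:v\in\{0,\dots,qN-1\}^n\}$. $H=\bigcup_{\hat x}\partial\hat V_{\hat x}$ (topological boundaries), $H_{\mathrm{bound}}=(-\frac1N,0]^n+H$, $\mathbb{N}=\{0,1,2,\dots\}$, and $H_{\mathrm{grid}}(\varepsilon)=\bigcup_{\hat x\in\hat X}\big((\frac1N\mathbb{N}^n+\partial\hat V_{\hat x})\cap\overline{\hat V_{\hat x}}\big)+[-\varepsilon,\varepsilon]^n$. *)

theory Defs
  imports "HOL-Analysis.Analysis"
begin

text \<open>Points of R^n are vectors of type real^'n, n = CARD('n).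
  The order on real^'n is the componentwise order.\<close>

definition full_rank_lattice :: "(real^'n) set \<Rightarrow> bool" where
  "full_rank_lattice \<Lambda> \<longleftrightarrow>
     (\<exists>B::'n \<Rightarrow> real^'n. inj B \<and> independent (range B) \<and>
        \<Lambda> = {(\<Sum>i\<in>UNIV. of_int (k i) *\<^sub>R B i) | k::'n \<Rightarrow> int. True})"

text \<open>The map d : X -> R^n/Lambda is represented by a choice of representatives
  d x in R^n; congruence modulo Lambda is "difference in Lambda".\<close>

definition infrastructure ::
  "(real^'n) set \<Rightarrow> 'x set \<Rightarrow> ('x \<Rightarrow> real^'n) \<Rightarrow> ('x \<times> (real^'n)) set \<Rightarrow> bool" where
  "infrastructure \<Lambda> X d fRep \<longleftrightarrow>
     full_rank_lattice \<Lambda> \<and> finite X \<and> X \<noteq> {} \<and>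
     (\<forall>x\<in>X. \<forall>y\<in>X. d x - d y \<in> \<Lambda> \<longrightarrow> x = y) \<and>
     fRep \<subseteq> X \<times> UNIV \<and> X \<times> {0} \<subseteq> fRep \<and>
     (\<forall>r. \<exists>(x,t)\<in>fRep. r - (d x + t) \<in> \<Lambda>) \<and>
     (\<forall>(x,t)\<in>fRep. \<forall>(y,u)\<in>fRep. (d x + t) - (d y + u) \<in> \<Lambda> \<longrightarrow> (x,t) = (y,u))"

definition Xhat :: "(real^'n) set \<Rightarrow> 'x set \<Rightarrow> ('x \<Rightarrow> real^'n) \<Rightarrow> (real^'n) set" where
  "Xhat \<Lambda> X d = {d x + l | x l. x \<in> X \<and> l \<in> \<Lambda>}"

definition Vhat ::
  "(real^'n) set \<Rightarrow> 'x set \<Rightarrow> ('x \<Rightarrow> real^'n) \<Rightarrow> ('x \<times> (real^'n)) set \<Rightarrow> real^'n \<Rightarrow> (real^'n) set" where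
  "Vhat \<Lambda> X d fRep xh = {xh + t | x t. x \<in> X \<and> xh - d x \<in> \<Lambda> \<and> (x, t) \<in> fRep}"

definition cornered ::
  "(real^'n) set \<Rightarrow> 'x set \<Rightarrow> ('x \<Rightarrow> real^'n) \<Rightarrow> ('x \<times> (real^'n)) set \<Rightarrow> bool" where
  "cornered \<Lambda> X d fRep \<longleftrightarrow>
     (\<forall>xh\<in>Xhat \<Lambda> X d. xh \<in> Vhat \<Lambda> X d fRep xh \<and>
        (\<forall>t\<in>Vhat \<Lambda> X d fRep xh. {r. xh \<le> r \<and> r \<le> t} \<subseteq> Vhat \<Lambda> X d fRep xh))"

definition cube :: "real \<Rightarrow> real \<Rightarrow> (real^'n) set" where
  "cube a b = {v. \<forall>i. a \<le> v $ i \<and> v $ i \<le> b}"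

definition Gset :: "nat \<Rightarrow> nat \<Rightarrow> real^'n \<Rightarrow> (real^'n) set" where
  "Gset N q s = {s + (1 / real N) *\<^sub>R (\<chi> i. real (v i)) | v::'n \<Rightarrow> nat. \<forall>i. v i < q * N}"

definition Sset :: "nat \<Rightarrow> nat \<Rightarrow> (real^'n) set" where
  "Sset N L = {(1 / real (N * L)) *\<^sub>R (\<chi> i. real (k i)) | k::'n \<Rightarrow> nat. \<forall>i. k i < L}"

definition grid :: "nat \<Rightarrow> (real^'n) set" where
  "grid N = {(1 / real N) *\<^sub>R (\<chi> i. real (k i)) | k::'n \<Rightarrow> nat. True}"

definition Hset ::
  "(real^'n) set \<Rightarrow> 'x set \<Rightarrow> ('x \<Rightarrow> real^'n) \<Rightarrow> ('x \<times> (real^'n)) set \<Rightarrow> (real^'n) set" where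
  "Hset \<Lambda> X d fRep = (\<Union>xh\<in>Xhat \<Lambda> X d. frontier (Vhat \<Lambda> X d fRep xh))"

definition Hbound ::
  "(real^'n) set \<Rightarrow> 'x set \<Rightarrow> ('x \<Rightarrow> real^'n) \<Rightarrow> ('x \<times> (real^'n)) set \<Rightarrow> nat \<Rightarrow> (real^'n) set" where
  "Hbound \<Lambda> X d fRep N =
     {a + h | a h. (\<forall>i. - (1 / real N) < a $ i \<and> a $ i \<le> 0) \<and> h \<in> Hset \<Lambda> X d fRep}"

definition Hgrid ::
  "(real^'n) set \<Rightarrow> 'x set \<Rightarrow> ('x \<Rightarrow> real^'n) \<Rightarrow> ('x \<times> (real^'n)) set \<Rightarrow> nat \<Rightarrow> real \<Rightarrow> (real^'n) set" where
  "Hgrid \<Lambda> X d fRep N \<epsilon> =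
     {p + e | p e.
        p \<in> (\<Union>xh\<in>Xhat \<Lambda> X d.
               {g + b | g b. g \<in> grid N \<and> b \<in> frontier (Vhat \<Lambda> X d fRep xh)}
               \<inter> closure (Vhat \<Lambda> X d fRep xh))
        \<and> e \<in> cube (- \<epsilon>) \<epsilon>}"

end

theory Submission
  imports Defs
begin


lemma lattice_diff:
  fixes \<Lambda> :: "(real^'n) set"
  assumes "full_rank_lattice \<Lambda>" "a \<in> \<Lambda>" "b \<in> \<Lambda>" shows "a - b \<in> \<Lambda>"
proof -
  obtain B :: "'n \<Rightarrow> real^'n" where L: "\<Lambda> = {(\<Sum>i\<in>UNIV. of_int (k i) *\<^sub>R B i) | k::'n \<Rightarrow> int. True}"
    using assms(1) unfolding full_rank_lattice_def by blast
  obtain ka where a: "a = (\<Sum>i\<in>UNIV. of_int (ka i) *\<^sub>R B i)" using assms(2) L by blast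
  obtain kb where b: "b = (\<Sum>i\<in>UNIV. of_int (kb i) *\<^sub>R B i)" using assms(3) L by blast
  have eq: "a - b = (\<Sum>i\<in>UNIV. of_int ((\<lambda>i. ka i - kb i) i) *\<^sub>R B i)"
    unfolding a b sum_subtractf[symmetric] by (simp add: scaleR_diff_left)
  show ?thesis unfolding L mem_Collect_eq
    apply (rule exI[of _ "\<lambda>i. ka i - kb i"]) using eq by simp
qed

locale ictx =
  fixes \<Lambda> :: "(real^'n) set" and X :: "'x set" and d :: "'x \<Rightarrow> real^'n"
    and fRep :: "('x \<times> (real^'n)) set" and A C D :: real
  assumes infra: "infrastructure \<Lambda> X d fRep"
    and corn: "cornered \<Lambda> X d fRep"
    and Apos: "A > 0" and A1: "\<forall>xh\<in>Xhat \<Lambda> X d. Vhat \<Lambda> X d fRep xh \<subseteq> (\<lambda>v. xh + v) ` cube 0 A"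
    and Cpos: "C > 0" and Dpos: "D > 0"
    and A2: "\<forall>r::real^'n. finite ((\<lambda>v. r + v) ` cube 0 C \<inter> Xhat \<Lambda> X d) \<and>
              real (card ((\<lambda>v. r + v) ` cube 0 C \<inter> Xhat \<Lambda> X d)) \<le> D"
begin

abbreviation "V \<equiv> Vhat \<Lambda> X d fRep"
abbreviation "Xh \<equiv> Xhat \<Lambda> X d"

lemma lat: "full_rank_lattice \<Lambda>" 
  using infra unfolding infrastructure_def by (elim conjE) assumption
lemma fRep_sub: "fRep \<subseteq> X \<times> UNIV" 
  using infra unfolding infrastructure_def by (elim conjE) assumption
lemma covr: "\<forall>r. \<exists>(x,t)\<in>fRep. r - (d x + t) \<in> \<Lambda>"
  using infra unfolding infrastructure_def by (elim conjE) assumption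
lemma injr: "\<forall>(x,t)\<in>fRep. \<forall>(y,u)\<in>fRep. (d x + t) - (d y + u) \<in> \<Lambda> \<longrightarrow> (x,t) = (y,u)"
  using infra unfolding infrastructure_def by (elim conjE) assumption

lemma V_disj:
  assumes "p \<in> V xh" "p \<in> V yh" shows "xh = yh"
proof -
  obtain x t where x: "p = xh + t" "x \<in> X" "xh - d x \<in> \<Lambda>" "(x,t) \<in> fRep"
    using assms(1) unfolding Vhat_def by blast
  obtain y u where y: "p = yh + u" "y \<in> X" "yh - d y \<in> \<Lambda>" "(y,u) \<in> fRep"
    using assms(2) unfolding Vhat_def by blast
  have e: "(d x + t) - (d y + u) = (yh - d y) - (xh - d x)" using x(1) y(1)
    by (simp add: algebra_simps)
  have inl: "(d x + t) - (d y + u) \<in> \<Lambda>" unfolding e using lattice_diff[OF lat y(3) x(3)] .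
  have i1: "\<forall>(y',u')\<in>fRep. (d x + t) - (d y' + u') \<in> \<Lambda> \<longrightarrow> (x,t) = (y',u')"
    using bspec[OF injr x(4)] by simp
  have "(d x + t) - (d y + u) \<in> \<Lambda> \<longrightarrow> (x,t) = (y,u)"
    using bspec[OF i1 y(4)] by simp
  then have "(x,t) = (y,u)" using inl by (rule mp)
  then have "t = u" by simp
  then show ?thesis using x(1) y(1) by simp
qed

lemma V_cover: "\<exists>yh\<in>Xh. r \<in> V yh"
proof -
  obtain x t where xt: "(x,t) \<in> fRep" "r - (d x + t) \<in> \<Lambda>"
    using covr by blast
  have x: "x \<in> X" using xt(1) fRep_sub by blast
  define yh where "yh = d x + (r - (d x + t))"
  have "yh \<in> Xh" unfolding Xhat_def yh_def using x xt by blast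
  moreover have "r \<in> V yh" unfolding Vhat_def
    apply (rule CollectI) apply (rule exI[of _ x], rule exI[of _ t])
    using x xt by (simp add: yh_def algebra_simps)
  ultimately show ?thesis by blast
qed

lemma V_bound:
  assumes "yh \<in> Xh" "p \<in> V yh" shows "yh $ i \<le> p $ i \<and> p $ i \<le> yh $ i + A"
proof -
  obtain v where "p = yh + v" "v \<in> cube 0 A" using A1 assms by blast
  then show ?thesis unfolding cube_def by auto
qed

lemma count_box:
  fixes r :: "real^'n" and K :: nat
  defines "S \<equiv> Xh \<inter> {y. \<forall>i. r$i \<le> y$i \<and> y$i < r$i + real K * C}"
  shows "finite S \<and> real (card S) \<le> real K ^ CARD('n) * D"
proof -
  define J where "J = PiE (UNIV::'n set) (\<lambda>_. {..<K})"
  have finJ: "finite J" unfolding J_def by (simp add: finite_PiE)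
  have cardJ: "card J = K ^ CARD('n)" unfolding J_def by (simp add: card_PiE)
  define Q where "Q j = (\<lambda>v. (r + (\<chi> i. C * real (j i))) + v) ` cube 0 C \<inter> Xh" for j :: "'n \<Rightarrow> nat"
  have sub: "S \<subseteq> (\<Union>j\<in>J. Q j)"
  proof
    fix y assume yS: "y \<in> S"
    define j where "j = (\<lambda>i. nat \<lfloor>(y$i - r$i) / C\<rfloor>)"
    have fl: "real (j i) = of_int \<lfloor>(y$i - r$i) / C\<rfloor>" for i
    proof -
      have "0 \<le> (y$i - r$i) / C" using yS Cpos unfolding S_def by auto
      then show ?thesis unfolding j_def by simp
    qed
    have jJ: "j \<in> J" unfolding J_def
    proof (simp add: PiE_iff, intro allI)
      fix i
      have "y$i < r$i + real K * C" using yS unfolding S_def by blast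
      then have "y$i - r$i < real K * C" by simp
      then have "(y$i - r$i) / C < real K" using Cpos by (simp add: divide_less_eq)
      then have "of_int \<lfloor>(y$i - r$i) / C\<rfloor> < real K" by linarith
      then show "j i < K" using fl[of i] by linarith
    qed
    define b where "b = r + (\<chi> i. C * real (j i))"
    have "y - b \<in> cube 0 C" unfolding cube_def
    proof (intro CollectI allI conjI)
      fix i
      have f1: "of_int \<lfloor>(y$i - r$i) / C\<rfloor> \<le> (y$i - r$i) / C" by linarith
      have f2: "(y$i - r$i) / C < of_int \<lfloor>(y$i - r$i) / C\<rfloor> + 1" by linarith
      have g1: "C * of_int \<lfloor>(y$i - r$i) / C\<rfloor> \<le> y$i - r$i"
        using mult_left_mono[OF f1, of C] Cpos by simp
      have g2: "y$i - r$i < C * (of_int \<lfloor>(y$i - r$i) / C\<rfloor> + 1)"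
        using mult_strict_left_mono[OF f2 Cpos] Cpos by simp
      have g2': "y$i - r$i < C * of_int \<lfloor>(y$i - r$i) / C\<rfloor> + C" using g2 by (simp add: distrib_left)
      have comp: "(y - b)$i = y$i - r$i - C * real (j i)" unfolding b_def by simp
      show "0 \<le> (y - b) $ i" unfolding comp fl[of i] using g1 by linarith
      show "(y - b) $ i \<le> C" unfolding comp fl[of i] using g2' by linarith
    qed
    then have "y \<in> Q j" unfolding Q_def using yS unfolding S_def b_def[symmetric]
      by (auto intro!: image_eqI[of _ _ "y - b"])
    then show "y \<in> (\<Union>j\<in>J. Q j)" using jJ by blast
  qed
  have finQ: "finite (Q j)" for j unfolding Q_def using A2 by blast
  have finU: "finite (\<Union>j\<in>J. Q j)" using finJ finQ by blast
  have "real (card S) \<le> real (card (\<Union>j\<in>J. Q j))" using card_mono[OF finU sub] by simp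
  also have "\<dots> \<le> real (\<Sum>j\<in>J. card (Q j))" using card_UN_le[OF finJ, of Q] by linarith
  also have "\<dots> = (\<Sum>j\<in>J. real (card (Q j)))" by simp
  also have "\<dots> \<le> (\<Sum>j\<in>J. D)" apply (rule sum_mono) unfolding Q_def using A2 by blast
  also have "\<dots> = real K ^ CARD('n) * D" using cardJ by simp
  finally show ?thesis using finite_subset[OF sub finU] by blast
qed

definition W where
  "W yh = {h. h \<notin> interior (V yh) \<and> (\<forall>e>0. \<exists>\<delta>>0. \<delta> < e \<and> h - (\<chi> i. \<delta>) \<in> V yh)}"

lemma W_D: "h \<in> W yh \<Longrightarrow> e > 0 \<Longrightarrow> \<exists>\<delta>>0. \<delta> < e \<and> h - (\<chi> i. \<delta>) \<in> V yh"
  unfolding W_def by blast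

lemma W_ni: "h \<in> W yh \<Longrightarrow> h \<notin> interior (V yh)"
  unfolding W_def by blast

lemma corner: "yh \<in> Xh \<Longrightarrow> p \<in> V yh \<Longrightarrow> {r. yh \<le> r \<and> r \<le> p} \<subseteq> V yh"
  using corn unfolding cornered_def by blast

lemma W_bound:
  assumes yh: "yh \<in> Xh" and h: "h \<in> W yh"
  shows "yh$i < h$i \<and> h$i \<le> yh$i + A"
proof
  obtain \<delta> where "\<delta> > 0" "h - (\<chi> i. \<delta>) \<in> V yh" using W_D[OF h, of 1] by auto
  then show "yh$i < h$i" using V_bound[OF yh, of "h - (\<chi> i. \<delta>)" i] by simp
  show "h$i \<le> yh$i + A"
  proof (rule ccontr)
    assume c: "\<not> ?thesis"
    have e0: "h$i - yh$i - A > 0" using c by simp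
    obtain \<delta> where "\<delta> > 0" "\<delta> < h$i - yh$i - A" "h - (\<chi> i. \<delta>) \<in> V yh"
      using W_D[OF h e0] by blast
    then show False using V_bound[OF yh, of "h - (\<chi> i. \<delta>)" i] by simp
  qed
qed

lemma W_chain:
  assumes yh: "yh \<in> Xh" and h: "h \<in> W yh" and h': "h' \<in> W yh" and lt: "\<forall>i. h$i < h'$i"
  shows False
proof -
  define e where "e = Min (range (\<lambda>i. h'$i - h$i))"
  have e0: "e > 0" unfolding e_def using lt by (simp add: Min_gr_iff)
  have ele: "e \<le> h'$i - h$i" for i unfolding e_def by (rule Min_le) auto
  obtain \<delta> where d: "\<delta> > 0" "\<delta> < e" "h' - (\<chi> i. \<delta>) \<in> V yh" using W_D[OF h' e0] by blast
  define p where "p = h' - (\<chi> i. \<delta>)"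
  have pV: "p \<in> V yh" using d p_def by simp
  have "{r. yh \<le> r \<and> r \<le> p} \<subseteq> V yh" using corner[OF yh pV] .
  moreover have "box yh p \<subseteq> {r. yh \<le> r \<and> r \<le> p}"
  proof
    fix x assume "x \<in> box yh p"
    then have "\<forall>i. yh$i < x$i \<and> x$i < p$i" by (simp add: mem_box_cart)
    then show "x \<in> {r. yh \<le> r \<and> r \<le> p}" by (simp add: less_eq_vec_def less_imp_le)
  qed
  moreover have "h \<in> box yh p"
  proof -
    have "yh$i < h$i \<and> h$i < p$i" for i
      using W_bound[OF yh h, of i] ele[of i] d unfolding p_def by simp
    then show ?thesis by (simp add: mem_box_cart)
  qed
  ultimately have "box yh p \<subseteq> interior (V yh)"
    by (intro interior_maximal) auto
  then have "h \<in> interior (V yh)" using \<open>h \<in> box yh p\<close> by blast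
  then show False using W_ni[OF h] by blast
qed



lemma H_W:
  assumes "h \<in> Hset \<Lambda> X d fRep" shows "\<exists>yh\<in>Xh. h \<in> W yh"
proof -
  obtain xh where xh: "xh \<in> Xh" "h \<in> frontier (V xh)" using assms unfolding Hset_def by blast
  have hcl: "h \<in> closure (V xh)" "h \<notin> interior (V xh)" using xh(2) unfolding frontier_def by auto
  define p where "p k = h - (\<chi> i. 1 / (real k + 1))" for k :: nat
  have "\<forall>k. \<exists>yh. yh \<in> Xh \<and> p k \<in> V yh" using V_cover by (simp add: Bex_def)
  from choice[OF this] obtain f where f0: "\<forall>k. f k \<in> Xh \<and> p k \<in> V (f k)" by (elim exE)
  have f: "\<And>k. f k \<in> Xh" "\<And>k. p k \<in> V (f k)" using f0 by simp_all
  define r where "r = h - (\<chi> i. A + 1)"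
  define K where "K = nat \<lceil>(A + 1)/C\<rceil> + 1"
  have KC: "real K * C > A + 1"
  proof -
    have "real K \<ge> (A+1)/C + 1" unfolding K_def using real_nat_ceiling_ge[of "(A+1)/C"] by simp
    then have "real K * C \<ge> ((A+1)/C + 1) * C" using Cpos by (simp add: mult_right_mono)
    also have "((A+1)/C + 1) * C = A + 1 + C" using Cpos by (simp add: field_simps)
    finally show ?thesis using Cpos by simp
  qed
  have fr: "range f \<subseteq> Xh \<inter> {y. \<forall>i. r$i \<le> y$i \<and> y$i < r$i + real K * C}"
  proof
    fix y assume "y \<in> range f"
    then obtain k where k: "y = f k" by blast
    have "r$i \<le> y$i \<and> y$i < r$i + real K * C" for i
    proof -
      have b: "f k $ i \<le> p k $ i \<and> p k $ i \<le> f k $ i + A" using V_bound[OF f(1) f(2)] .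
      have pk: "p k $ i = h$i - 1 / (real k + 1)" unfolding p_def by simp
      have "1 / (real k + 1) \<le> 1" by simp
      moreover have "1 / (real k + 1) > 0" by simp
      moreover have ri: "r$i = h$i - (A + 1)" unfolding r_def by simp
      ultimately show ?thesis using b pk KC unfolding k by linarith
    qed
    then show "y \<in> Xh \<inter> {y. \<forall>i. r$i \<le> y$i \<and> y$i < r$i + real K * C}" using f(1) k by blast
  qed
  have cb: "finite (Xh \<inter> {y. \<forall>i. r$i \<le> y$i \<and> y$i < r$i + real K * C})"
    using count_box[of r K] by (rule conjunct1)
  have fin: "finite (range f)" using finite_subset[OF fr cb] .
  obtain yh where yh: "yh \<in> range f" "infinite (f -` {yh})"
    using inf_img_fin_dom[OF fin] by blast
  have yhX: "yh \<in> Xh" using yh(1) f(1) by blast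
  have nint: "h \<notin> interior (V yh)"
  proof (cases "yh = xh")
    case True then show ?thesis using hcl by simp
  next
    case False
    have "V yh \<inter> V xh = {}" using V_disj False by blast
    then have "interior (V yh) \<inter> V xh = {}" using interior_subset by blast
    then have "interior (V yh) \<inter> closure (V xh) = {}"
      using open_Int_closure_eq_empty[OF open_interior] by blast
    then show ?thesis using hcl by blast
  qed
  have "\<exists>\<delta>>0. \<delta> < e \<and> h - (\<chi> i. \<delta>) \<in> V yh" if e: "e > 0" for e
  proof -
    have "\<forall>m. \<exists>n\<ge>m. n \<in> f -` {yh}" using infinite_nat_iff_unbounded_le[THEN iffD1, OF yh(2)] .
    then obtain k where k: "k \<ge> nat \<lceil>1/e\<rceil>" "k \<in> f -` {yh}" by blast
    have "real k \<ge> real (nat \<lceil>1/e\<rceil>)" using k(1) by (rule of_nat_mono)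
    then have "real k \<ge> 1/e" using real_nat_ceiling_ge[of "1/e"] by linarith
    then have "real k + 1 > 1/e" by linarith
    then have "e * (1/e) < e * (real k + 1)" using e by (rule mult_strict_left_mono)
    then have "1 < e * (real k + 1)" using e by simp
    moreover have "(0::real) < real k + 1" by simp
    ultimately have lt: "1 / (real k + 1) < e" using pos_divide_less_eq[of "real k + 1" 1 e] by simp
    have fk: "f k = yh" using k(2) by simp
    have inV: "h - (\<chi> i. 1 / (real k + 1)) \<in> V yh" using f(2)[of k] unfolding fk p_def .
    have pos: "1 / (real k + 1) > 0" by simp
    show ?thesis using lt inV pos by blast
  qed
  then have "h \<in> W yh" using nint unfolding W_def by blast
  then show ?thesis using yhX by blast
qed

definition idx :: "nat \<Rightarrow> real^'n \<Rightarrow> ('n \<Rightarrow> nat) \<Rightarrow> real^'n" where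
  "idx N s v = s + (1 / real N) *\<^sub>R (\<chi> i. real (v i))"

lemma idx_comp: "idx N s v $ i = s$i + real (v i) / real N"
  by (simp add: idx_def)

definition Bv where
  "Bv N q s yh = {v. (\<forall>i. v i < q*N) \<and>
      (\<exists>h\<in>W yh. \<forall>i. idx N s v $ i \<le> h$i \<and> h$i < idx N s v $ i + 1 / real N)}"

lemma Bv_chain:
  assumes yh: "yh \<in> Xh" and N: "N \<ge> 1" and v: "v \<in> Bv N q s yh" and w: "w \<in> Bv N q s yh"
    and lt: "\<forall>i. w i < v i"
  shows False
proof -
  obtain hv where hv: "hv \<in> W yh" "\<forall>i. idx N s v $ i \<le> hv$i \<and> hv$i < idx N s v $ i + 1 / real N"
    using v unfolding Bv_def by blast
  obtain hw where hw: "hw \<in> W yh" "\<forall>i. idx N s w $ i \<le> hw$i \<and> hw$i < idx N s w $ i + 1 / real N"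
    using w unfolding Bv_def by blast
  have "hw$i < hv$i" for i
  proof -
    have "real (w i) + 1 \<le> real (v i)" using lt[rule_format, of i] by linarith
    then have "(real (w i) + 1) / real N \<le> real (v i) / real N" using N by (simp add: divide_right_mono)
    then have "real (w i) / real N + 1 / real N \<le> real (v i) / real N" by (simp add: add_divide_distrib)
    then show ?thesis using hv(2)[rule_format, of i] hw(2)[rule_format, of i] unfolding idx_comp by linarith
  qed
  then show False using W_chain[OF yh hw(1) hv(1)] by blast
qed

lemma prod_if_one:
  fixes i :: "'n::finite" and m :: nat
  shows "(\<Prod>j\<in>UNIV. if j = i then 1 else m) = m ^ (CARD('n) - 1)"
proof -
  have "(\<Prod>j\<in>UNIV. if j = i then 1 else m) = (if i = i then 1 else m) * (\<Prod>j\<in>UNIV - {i}. if j = i then 1 else m)"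
    by (rule prod.remove) auto
  also have "(\<Prod>j\<in>UNIV - {i}. if j = i then 1 else m) = (\<Prod>j\<in>UNIV - {i}. m)"
    by (rule prod.cong) auto
  also have "\<dots> = m ^ (CARD('n) - 1)" by (simp add: card_Diff_singleton)
  finally show ?thesis by simp
qed

lemma Bv_card:
  assumes yh: "yh \<in> Xh" and N: "N \<ge> 1"
  shows "card (Bv N q s yh) \<le> CARD('n) * (nat \<lceil>A * real N\<rceil> + 1) ^ (CARD('n) - 1)"
proof -
  define m where "m = nat \<lceil>A * real N\<rceil> + 1"
  define a where "a i = \<lfloor>real N * (yh$i - s$i)\<rfloor>" for i
  have Npos: "real N > 0" using N by simp
  have rng: "0 \<le> int (v i) - a i \<and> int (v i) - a i \<le> \<lceil>A * real N\<rceil>" if v: "v \<in> Bv N q s yh" for v i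
  proof -
    obtain h where h: "h \<in> W yh" "idx N s v $ i \<le> h$i" "h$i < idx N s v $ i + 1 / real N"
      using v unfolding Bv_def by blast
    have hb: "yh$i < h$i" "h$i \<le> yh$i + A" using W_bound[OF yh h(1)] by auto
    have e1: "real (v i) / real N \<le> h$i - s$i" using h(2) unfolding idx_comp by simp
    have e1': "real (v i) \<le> real N * (h$i - s$i)" using e1 Npos by (simp add: divide_le_eq mult.commute)
    have e2: "h$i - s$i < (real (v i) + 1) / real N" using h(3) unfolding idx_comp by (simp add: add_divide_distrib)
    have e2': "real N * (h$i - s$i) < real (v i) + 1" using e2 Npos by (simp add: less_divide_eq mult.commute)
    have m1: "real N * (yh$i - s$i) < real N * (h$i - s$i)" using hb(1) Npos by simp
    have "real N * (h$i - s$i) \<le> real N * (yh$i - s$i + A)"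
      using hb(2) Npos by (intro mult_left_mono) auto
    then have m2: "real N * (h$i - s$i) \<le> real N * (yh$i - s$i) + A * real N"
      by (simp add: algebra_simps)
    have fa: "of_int (a i) \<le> real N * (yh$i - s$i)" "real N * (yh$i - s$i) < of_int (a i) + 1"
      unfolding a_def by linarith+
    have "of_int (a i) < real (v i) + 1" using fa e2' m1 by linarith
    then have "a i < int (v i) + 1" by linarith
    moreover have "real (v i) - of_int (a i) < A * real N + 1" using fa e1' m2 by linarith
    then have "int (v i) - a i < \<lceil>A * real N\<rceil> + 1" by linarith
    ultimately show ?thesis by linarith
  qed
  define \<mu> where "\<mu> v = Min (range (\<lambda>i. int (v i) - a i))" for v :: "'n \<Rightarrow> nat"
  have mu_le: "\<mu> v \<le> int (v i) - a i" for v i unfolding \<mu>_def by (rule Min_le) auto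
  have mu_in: "\<exists>i. \<mu> v = int (v i) - a i" for v
  proof -
    have "\<mu> v \<in> range (\<lambda>i. int (v i) - a i)" unfolding \<mu>_def by (rule Min_in) auto
    then show ?thesis by auto
  qed
  have mu_ge: "\<mu> v \<ge> 0" if "v \<in> Bv N q s yh" for v
  proof -
    obtain i where "\<mu> v = int (v i) - a i" using mu_in by blast
    then show ?thesis using rng[OF that, of i] by simp
  qed
  define \<phi> where "\<phi> v = (\<lambda>i. nat (int (v i) - a i - \<mu> v))" for v
  define T where "T i = PiE (UNIV::'n set) (\<lambda>j. if j = i then {0} else {..<m})" for i
  have finTi: "finite (T i)" for i unfolding T_def by (rule finite_PiE) auto
  have finT: "finite (\<Union>i. T i)" using finTi by simp
  have cardT: "card (T i) = m ^ (CARD('n) - 1)" for i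
  proof -
    have "card (T i) = (\<Prod>j\<in>UNIV. card (if j = i then {0} else {..<m}))"
      unfolding T_def by (simp add: card_PiE)
    also have "\<dots> = (\<Prod>j\<in>UNIV. if j = i then 1 else m)" by (rule prod.cong) auto
    finally show ?thesis using prod_if_one by simp
  qed
  have img: "\<phi> ` Bv N q s yh \<subseteq> (\<Union>i. T i)"
  proof
    fix w assume "w \<in> \<phi> ` Bv N q s yh"
    then obtain v where v: "v \<in> Bv N q s yh" "w = \<phi> v" by blast
    obtain i0 where i0: "\<mu> v = int (v i0) - a i0" using mu_in by blast
    have w0: "w i0 = 0" using i0 unfolding v(2) \<phi>_def by simp
    have wm: "w j < m" for j
    proof -
      have "int (v j) - a j - \<mu> v \<le> \<lceil>A * real N\<rceil>" using rng[OF v(1), of j] mu_ge[OF v(1)] by linarith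
      then show "w j < m" unfolding v(2) \<phi>_def m_def by linarith
    qed
    have "\<forall>j. w j \<in> (if j = i0 then {0} else {..<m})" using w0 wm by simp
    then have "w \<in> T i0" unfolding T_def by (simp add: PiE_iff)
    then show "w \<in> (\<Union>i. T i)" by blast
  qed
  have inj: "inj_on \<phi> (Bv N q s yh)"
  proof
    fix v w assume v: "v \<in> Bv N q s yh" and w: "w \<in> Bv N q s yh" and eq: "\<phi> v = \<phi> w"
    have e: "int (v i) - \<mu> v = int (w i) - \<mu> w" for i
    proof -
      have "nat (int (v i) - a i - \<mu> v) = nat (int (w i) - a i - \<mu> w)"
        using fun_cong[OF eq, of i] unfolding \<phi>_def by simp
      moreover have "int (v i) - a i - \<mu> v \<ge> 0" "int (w i) - a i - \<mu> w \<ge> 0"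
        using mu_le[of v i] mu_le[of w i] by auto
      ultimately show ?thesis by linarith
    qed
    consider "\<mu> v = \<mu> w" | "\<mu> v > \<mu> w" | "\<mu> v < \<mu> w" by linarith
    then show "v = w"
    proof cases
      case 1
      have "v i = w i" for i using e[of i] 1 by simp
      then show ?thesis by (rule ext)
    next
      case 2
      have "int (w i) < int (v i)" for i using e[of i] 2 by linarith
      then have "\<forall>i. w i < v i" by simp
      then show ?thesis using Bv_chain[OF yh N v w] by blast
    next
      case 3
      have "int (v i) < int (w i)" for i using e[of i] 3 by linarith
      then have "\<forall>i. v i < w i" by simp
      then show ?thesis using Bv_chain[OF yh N w v] by blast
    qed
  qed
  have "card (Bv N q s yh) \<le> card (\<Union>i. T i)" by (rule card_inj_on_le[OF inj img finT])
  also have "\<dots> \<le> (\<Sum>i\<in>UNIV. card (T i))" by (rule card_UN_le) simp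
  also have "\<dots> = CARD('n) * m ^ (CARD('n) - 1)" using cardT by simp
  finally show ?thesis unfolding m_def .
qed

lemma VS_eq: "{v::'n \<Rightarrow> nat. \<forall>i. v i < M} = PiE UNIV (\<lambda>_. {..<M})"
  by (auto simp: PiE_iff)

lemma Gset_eq: "Gset N q s = idx N s ` {v. \<forall>i. v i < q*N}"
  unfolding Gset_def idx_def by blast

lemma idx_inj: assumes "N \<ge> 1" shows "inj (idx N s)"
proof
  fix v w assume "idx N s v = idx N s w"
  then have "idx N s v $ i = idx N s w $ i" for i by simp
  then have "real (v i) / real N = real (w i) / real N" for i unfolding idx_comp by simp
  then have "v i = w i" for i using assms by simp
  then show "v = w" by (rule ext)
qed

lemma bad_count:
  assumes N: "N \<ge> 1" and q: "q \<ge> 1"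
  shows "real (card (Gset N q s \<inter> Hbound \<Lambda> X d fRep N)) \<le>
     real (nat \<lceil>(real q + A)/C\<rceil>) ^ CARD('n) * D *
       real (CARD('n) * (nat \<lceil>A * real N\<rceil> + 1) ^ (CARD('n) - 1))"
proof -
  define VS where "VS = {v::'n \<Rightarrow> nat. \<forall>i. v i < q*N}"
  define BV where "BV = {v \<in> VS. idx N s v \<in> Hbound \<Lambda> X d fRep N}"
  define M where "M = CARD('n) * (nat \<lceil>A * real N\<rceil> + 1) ^ (CARD('n) - 1)"
  define K where "K = nat \<lceil>(real q + A)/C\<rceil>"
  define r where "r = s - (\<chi> i. A)"
  define Y where "Y = Xh \<inter> {y. \<forall>i. r$i \<le> y$i \<and> y$i < r$i + real K * C}"
  have Npos: "real N > 0" using N by simp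
  have finVS: "finite VS" unfolding VS_def VS_eq by (simp add: finite_PiE)
  have inj: "inj (idx N s)" by (rule idx_inj[OF N])
  have "Gset N q s \<inter> Hbound \<Lambda> X d fRep N = idx N s ` BV"
    unfolding Gset_eq BV_def VS_def by blast
  then have cardB: "card (Gset N q s \<inter> Hbound \<Lambda> X d fRep N) = card BV"
    using inj by (simp add: card_image inj_on_subset)
  have KC: "real K * C \<ge> real q + A"
  proof -
    have "real K \<ge> (real q + A)/C" unfolding K_def using real_nat_ceiling_ge by simp
    then show ?thesis using Cpos by (simp add: pos_divide_le_eq)
  qed
  have sub: "BV \<subseteq> (\<Union>yh\<in>Y. Bv N q s yh)"
  proof
    fix v assume v: "v \<in> BV"
    then have vV: "\<forall>i. v i < q*N" "idx N s v \<in> Hbound \<Lambda> X d fRep N"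
      unfolding BV_def VS_def by auto
    obtain a h where ah: "idx N s v = a + h" "\<forall>i. - (1 / real N) < a $ i \<and> a $ i \<le> 0"
       "h \<in> Hset \<Lambda> X d fRep"
      using vV(2) unfolding Hbound_def by blast
    obtain yh where yh: "yh \<in> Xh" "h \<in> W yh" using H_W[OF ah(3)] by blast
    have hb: "idx N s v $ i \<le> h$i \<and> h$i < idx N s v $ i + 1 / real N" for i
    proof -
      have "h$i = idx N s v $ i - a$i" using ah(1) by simp
      then show ?thesis using ah(2)[rule_format, of i] by simp
    qed
    have "v \<in> Bv N q s yh" unfolding Bv_def using vV(1) yh(2) hb by blast
    moreover have "yh \<in> Y" unfolding Y_def
    proof (intro IntI CollectI allI conjI)
      show "yh \<in> Xh" by (rule yh(1))
      fix i
      have wb: "yh$i < h$i" "h$i \<le> yh$i + A" using W_bound[OF yh] by auto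
      have ri: "r$i = s$i - A" unfolding r_def by simp
      have "real (v i) / real N \<ge> 0" by simp
      then have "s$i \<le> h$i" using hb[of i] unfolding idx_comp by linarith
      then show "r$i \<le> yh$i" using wb ri by linarith
      have "real (v i) + 1 \<le> real q * real N" using vV(1)[rule_format, of i]
        by (metis of_nat_add of_nat_le_iff of_nat_mult of_nat_1 Suc_leI Suc_eq_plus1)
      then have "(real (v i) + 1) / real N \<le> real q" using Npos by (simp add: pos_divide_le_eq)
      then have "real (v i) / real N + 1 / real N \<le> real q" by (simp add: add_divide_distrib)
      then have "h$i < s$i + real q" using hb[of i] unfolding idx_comp by linarith
      then show "yh$i < r$i + real K * C" using wb ri KC by linarith
    qed
    ultimately show "v \<in> (\<Union>yh\<in>Y. Bv N q s yh)" by blast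
  qed
  have cY: "finite Y \<and> real (card Y) \<le> real K ^ CARD('n) * D"
    unfolding Y_def by (rule count_box)
  have BvVS: "Bv N q s yh \<subseteq> VS" for yh unfolding Bv_def VS_def by blast
  have finU: "finite (\<Union>yh\<in>Y. Bv N q s yh)" using cY finVS BvVS finite_subset by blast
  have "card BV \<le> card (\<Union>yh\<in>Y. Bv N q s yh)" by (rule card_mono[OF finU sub])
  also have "\<dots> \<le> (\<Sum>yh\<in>Y. card (Bv N q s yh))" using cY by (intro card_UN_le) simp
  also have "\<dots> \<le> (\<Sum>yh\<in>Y. M)" 
  proof (rule sum_mono)
    fix yh assume "yh \<in> Y"
    then have "yh \<in> Xh" unfolding Y_def by blast
    then show "card (Bv N q s yh) \<le> M" unfolding M_def by (rule Bv_card[OF _ N])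
  qed
  also have "\<dots> = card Y * M" by simp
  finally have "real (card BV) \<le> real (card Y) * real M" by (simp flip: of_nat_mult)
  also have "\<dots> \<le> (real K ^ CARD('n) * D) * real M" using cY by (intro mult_right_mono) auto
  finally show ?thesis unfolding cardB K_def M_def .
qed

end


lemma nat_ceil_le: assumes "x \<ge> 0" shows "real (nat \<lceil>x\<rceil>) \<le> x + 1"
proof -
  have "0 \<le> \<lceil>x\<rceil>" using assms by simp
  then have "real (nat \<lceil>x\<rceil>) = of_int \<lceil>x\<rceil>" by simp
  then show ?thesis using of_int_ceiling_le_add_one[of x] by linarith
qed

lemma gen_eq:
  fixes al qn Nk nn Cn Nr tn :: real
  assumes "Cn > 0" "nn > 0" "tn > 0"
  shows "(al * qn * Nk * nn / Cn) * (3 * Cn * Nr / (8 * (nn + 1) * nn * tn)) =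
         (al * 3 / (8 * tn)) * (qn * (Nk * Nr) / (nn + 1))"
proof -
  have "nn + 1 > 0" using assms by simp
  then show ?thesis using assms by (simp add: divide_simps)
qed

lemma arith_final:
  fixes n N q :: nat and A C D :: real
  assumes n: "n \<ge> 1" and A: "A > 0" and C: "C > 0" "C \<le> 1" and D: "D > 0" and N: "N \<ge> 1"
    and q: "real q \<ge> 9 * max 1 A"
    and NA: "real N \<ge> 4 / A"
    and NB: "real N \<ge> 8 * (real n + 1) * real n * 2 ^ n * D * A ^ (n - 1) / (3 * C ^ n)"
  shows "real (nat \<lceil>(real q + A)/C\<rceil>) ^ n * D * real (n * (nat \<lceil>A * real N\<rceil> + 1) ^ (n - 1))
     \<le> real ((q*N)^n) / (4 * (real n + 1))"
proof -
  obtain k where nk: "n = Suc k" using n by (cases n) auto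
  define Kr where "Kr = real (nat \<lceil>(real q + A)/C\<rceil>)"
  define mr where "mr = real (nat \<lceil>A * real N\<rceil> + 1)"
  have q1: "real q \<ge> 9" "real q \<ge> 9 * A" using q by auto
  have Npos: "real N > 0" using N by simp
  have AN: "A * real N \<ge> 4" using NA A by (simp add: divide_le_eq mult.commute)
  have Kr0: "Kr \<ge> 0" unfolding Kr_def by simp
  have "Kr \<le> (real q + A)/C + 1" unfolding Kr_def
    by (rule nat_ceil_le) (use A C in simp)
  also have "\<dots> = (real q + A + C)/C" using C by (simp add: field_simps)
  also have "\<dots> \<le> (5/4 * real q)/C" using C q1 A by (intro divide_right_mono) auto
  finally have Krb: "Kr \<le> 5/4 * real q / C" .
  have mr0: "mr \<ge> 0" unfolding mr_def by simp
  have "0 \<le> A * real N" using A Npos by simp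
  then have nc: "real (nat \<lceil>A * real N\<rceil>) \<le> A * real N + 1" by (rule nat_ceil_le)
  have "mr \<le> A * real N + 2" unfolding mr_def of_nat_add of_nat_1 using nc by linarith
  also have "\<dots> \<le> 3/2 * (A * real N)" using AN by simp
  finally have mrb: "mr \<le> 3/2 * (A * real N)" .
  have f1: "Kr ^ n \<le> (5/4 * real q / C) ^ n" by (rule power_mono[OF Krb Kr0])
  have f2: "mr ^ k \<le> (3/2 * (A * real N)) ^ k" by (rule power_mono[OF mrb mr0])
  have Cn: "C ^ n > 0" using C by simp
  have f3: "D * A ^ k \<le> 3 * C ^ n * real N / (8 * (real n + 1) * real n * 2 ^ n)"
  proof -
    have "8 * (real n + 1) * real n * 2 ^ n * D * A ^ k \<le> real N * (3 * C ^ n)"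
      using NB Cn unfolding nk by (simp add: divide_le_eq)
    moreover have "8 * (real n + 1) * real n * 2 ^ n > 0" using n by simp
    ultimately show ?thesis by (simp add: le_divide_eq algebra_simps)
  qed
  have eqr: "real (n * (nat \<lceil>A * real N\<rceil> + 1) ^ (n - 1)) = real n * mr ^ k"
    unfolding mr_def nk by (simp only: of_nat_mult of_nat_power diff_Suc_1)
  have eqpow: "real q ^ n * (real N ^ k * real N) = (real q * real N) ^ n"
    unfolding nk by (simp add: power_mult_distrib mult_ac)
  have "Kr ^ n * D * real (n * (nat \<lceil>A * real N\<rceil> + 1) ^ (n - 1)) = Kr ^ n * real n * mr ^ k * D"
    unfolding eqr by (simp add: mult_ac)
  also have "\<dots> \<le> (5/4 * real q / C) ^ n * real n * (3/2 * (A * real N)) ^ k * D"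
    using f1 f2 D Kr0 mr0 C by (intro mult_right_mono mult_mono) auto
  also have "\<dots> = ((5/4) ^ n * (3/2) ^ k * real q ^ n * real N ^ k * real n / C ^ n) * (D * A ^ k)"
    by (simp add: power_mult_distrib power_divide mult_ac)
  also have "\<dots> \<le> ((5/4) ^ n * (3/2) ^ k * real q ^ n * real N ^ k * real n / C ^ n) *
      (3 * C ^ n * real N / (8 * (real n + 1) * real n * 2 ^ n))"
    using f3 C by (intro mult_left_mono) auto
  also have "\<dots> = ((5/4) ^ n * (3/2) ^ k * 3 / (8 * 2 ^ n)) * ((real q * real N) ^ n / (real n + 1))"
    by (subst eqpow[symmetric], rule gen_eq) (use Cn n in auto)
  also have "\<dots> \<le> (1/4) * ((real q * real N) ^ n / (real n + 1))"
  proof (rule mult_right_mono)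
    have "(5/4::real) ^ n * (3/2) ^ n \<le> 2 ^ n"
      unfolding power_mult_distrib[symmetric] by (rule power_mono) auto
    then have "(5/4::real) ^ n * (3/2) ^ k * (3/2) \<le> 2 ^ n" unfolding nk by simp
    then show "(5/4::real) ^ n * (3/2) ^ k * 3 / (8 * 2 ^ n) \<le> 1/4" by (simp add: field_simps)
  qed simp
  also have "\<dots> = real ((q*N)^n) / (4 * (real n + 1))" by simp
  finally show ?thesis unfolding Kr_def .
qed

theorem corollary5p2:
  fixes \<Lambda> :: "(real^'n) set" and X :: "'x set" and d :: "'x \<Rightarrow> real^'n"
    and fRep :: "('x \<times> (real^'n)) set"
    and A C D \<epsilon> :: real and N q L :: nat and s :: "real^'n"
  assumes infra: "infrastructure \<Lambda> X d fRep"
    and corn: "cornered \<Lambda> X d fRep"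
    and A1: "A > 0" "\<forall>xh\<in>Xhat \<Lambda> X d. Vhat \<Lambda> X d fRep xh \<subseteq> (\<lambda>v. xh + v) ` cube 0 A"
    and A2: "C > 0" "D > 0"
       "\<forall>r::real^'n. finite ((\<lambda>v. r + v) ` cube 0 C \<inter> Xhat \<Lambda> X d) \<and>
              real (card ((\<lambda>v. r + v) ` cube 0 C \<inter> Xhat \<Lambda> X d)) \<le> D"
    and C_le: "C \<le> 1"
    and NqL: "N \<ge> 1" "q \<ge> 1" "L \<ge> 1"
    and eps: "0 < \<epsilon>" "\<epsilon> \<le> 1 / (2 * real N * real L)"
    and q_ge: "real q \<ge> 9 * max 1 A"
    and N_ge: "real N \<ge> max (4 / A)
        (8 * (real CARD('n) + 1) * real CARD('n) * 2 ^ CARD('n) * D * A ^ (CARD('n) - 1)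
          / (3 * C ^ CARD('n)))"
    and s_in: "s \<in> Sset N L"
    and disj: "Hgrid \<Lambda> X d fRep N \<epsilon> \<inter> Gset N q s = {}"
  shows "1 / real N \<le> A / 4 \<and>
         real (card (Gset N q s - Hbound \<Lambda> X d fRep N)) / real (card (Gset N q s))
           \<ge> 1 - 1 / (4 * (real CARD('n) + 1))"
  proof -
  interpret ictx \<Lambda> X d fRep A C D
    using infra corn A1 A2 by (simp add: ictx_def)
  have Npos: "real N > 0" using NqL by simp
  have NA: "real N \<ge> 4 / A" using N_ge by simp
  have NB: "real N \<ge> 8 * (real CARD('n) + 1) * real CARD('n) * 2 ^ CARD('n) * D * A ^ (CARD('n) - 1)
          / (3 * C ^ CARD('n))" using N_ge by simp
  have AN: "4 \<le> A * real N" using NA Apos by (simp add: divide_le_eq mult.commute)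
  have part1: "1 / real N \<le> A / 4"
  proof -
    have "1 \<le> A / 4 * real N" using AN by simp
    then show ?thesis using Npos by (simp add: pos_divide_le_eq)
  qed
  define G where "G = Gset N q s"
  define cB where "cB = card (G \<inter> Hbound \<Lambda> X d fRep N)"
  have n1: "CARD('n) \<ge> 1" by (simp add: Suc_leI)
  have cG: "card G = (q * N) ^ CARD('n)"
  proof -
    have "card G = card {v::'n \<Rightarrow> nat. \<forall>i. v i < q*N}"
      unfolding G_def Gset_eq by (rule card_image, rule inj_on_subset[OF idx_inj[OF NqL(1)]]) simp
    also have "\<dots> = (q * N) ^ CARD('n)" unfolding VS_eq by (simp add: card_PiE)
    finally show ?thesis .
  qed
  have finG: "finite G" unfolding G_def Gset_eq VS_eq by (simp add: finite_PiE)
  have cGpos: "real (card G) > 0" unfolding cG using NqL by simp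
  have bc: "real cB \<le> real (nat \<lceil>(real q + A)/C\<rceil>) ^ CARD('n) * D *
       real (CARD('n) * (nat \<lceil>A * real N\<rceil> + 1) ^ (CARD('n) - 1))"
    unfolding cB_def G_def by (rule bad_count[OF NqL(1) NqL(2)])
  also have "\<dots> \<le> real ((q*N)^CARD('n)) / (4 * (real CARD('n) + 1))"
    by (rule arith_final[OF n1 Apos Cpos C_le Dpos NqL(1) q_ge NA NB])
  finally have bnd: "real cB \<le> real (card G) / (4 * (real CARD('n) + 1))" unfolding cG .
  have cBle: "cB \<le> card G" unfolding cB_def using finG by (intro card_mono) auto
  have cdiff: "card (G - Hbound \<Lambda> X d fRep N) = card G - cB"
    unfolding cB_def using finG by (intro card_Diff_subset_Int) simp
  have r1: "real cB / real (card G) \<le> 1 / (4 * (real CARD('n) + 1))"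
    using bnd cGpos by (simp add: pos_divide_le_eq)
  have "real (card (G - Hbound \<Lambda> X d fRep N)) / real (card G) = 1 - real cB / real (card G)"
    unfolding cdiff using cBle cGpos by (simp add: of_nat_diff diff_divide_distrib)
  then have part2: "real (card (G - Hbound \<Lambda> X d fRep N)) / real (card G) \<ge> 1 - 1 / (4 * (real CARD('n) + 1))"
    using r1 by linarith
  show ?thesis using part1 part2 unfolding G_def by blast
qed

end
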